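(* Let $\mathfrak d$ be a delta operator with basic sequence $(p_n(x))_{n\ge0}$, $\mathcal Z$ a grid, and for each $j\in\mathbb N$ let $(t^{(j)}_n(x))_{n\ge0}$ be the generalized Gončarov basis associated with $(\mathfrak d,\mathcal Z^{(j)})$ (so $t_n=t^{(0)}_n$ is the basis for $(\mathfrak d,\mathcal Z)$). Then for all $\xi\in\mathbb K$ and $n\in\mathbb N$, $$t_n(x+\xi)=\sum_{i=0}^n\binom ni t^{(i)}_{n-i}(\xi)\,p_i(x),\qquad\text{in particular}\qquad t_n(x)=\sum_{i=0}^n\binom ni t^{(i)}_{n-i}(0)\,p_i(x).$$
   Context: $\mathbb K$ is a field of characteristic zero; a delta operator is a linear operator $\mathfrak d$ on $\mathbb K[x]$ commuting with all shifts $E_a:f(x)\mapsto f(x+a)$ and with $\mathfrak d(x)$ a nonzero constant; its basic sequence is the unique $(p_n)$ with $\deg p_n=n$, $p_0=1$, $p_n(0)=0$ ($n\ge1$), $\mathfrak dp_n=np_{n-1}$. $\varepsilon_z$ is evaluation at $z$. A grid is a sequence $\mathcal Z=(z_i)_{i\ge0}$ in $\mathbb K$, and $\mathcal Z^{(j)}=(z_{i+j})_{i\ge0}$. The generalized Gončarov basis associated with $(\mathfrak d,\mathcal Z)$ is the unique sequence $(t_n)_{n\ge0}$ with $\deg t_n=n$ and $\varepsilon_{z_i}(\mathfrak d^{\,i}(t_n))=n!\,\delta_{i,n}$ for all $i,n$. *)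

theory Defs
  imports "HOL-Computational_Algebra.Polynomial"
begin

definition lin_op :: "('a::field poly \<Rightarrow> 'a poly) \<Rightarrow> bool" where
  "lin_op D \<longleftrightarrow> (\<forall>f g. D (f + g) = D f + D g) \<and> (\<forall>c f. D (smult c f) = smult c (D f))"

definition shift_op :: "'a::comm_semiring_1 \<Rightarrow> 'a poly \<Rightarrow> 'a poly" where
  "shift_op a f = pcompose f [:a, 1:]"

definition delta_op :: "('a::field poly \<Rightarrow> 'a poly) \<Rightarrow> bool" where
  "delta_op D \<longleftrightarrow> lin_op D \<and> (\<forall>a f. D (shift_op a f) = shift_op a (D f))
     \<and> (\<exists>c. c \<noteq> 0 \<and> D [:0, 1:] = [:c:])"

definition basic_seq :: "('a::field poly \<Rightarrow> 'a poly) \<Rightarrow> (nat \<Rightarrow> 'a poly) \<Rightarrow> bool" where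
  "basic_seq D p \<longleftrightarrow> p 0 = 1 \<and> (\<forall>n. degree (p n) = n)
     \<and> (\<forall>n\<ge>1. poly (p n) 0 = 0)
     \<and> (\<forall>n. D (p n) = smult (of_nat n) (p (n - 1)))"

definition gon_basis :: "('a::field poly \<Rightarrow> 'a poly) \<Rightarrow> (nat \<Rightarrow> 'a) \<Rightarrow> (nat \<Rightarrow> 'a poly) \<Rightarrow> bool" where
  "gon_basis D z t \<longleftrightarrow> (\<forall>n. degree (t n) = n)
     \<and> (\<forall>i n. poly ((D ^^ i) (t n)) (z i) = (if i = n then of_nat (fact n) else 0))"

end

theory Submission
  imports Defs
begin

lemma lin_zero: "lin_op D \<Longrightarrow> D 0 = 0"
  unfolding lin_op_def by (metis add_cancel_right_left add_0)

lemma lin_diff: "lin_op D \<Longrightarrow> D (f - g) = D f - D g"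
  unfolding lin_op_def by (metis add_diff_cancel diff_add_cancel)

lemma lin_sum: "lin_op D \<Longrightarrow> D (sum f A) = (\<Sum>x\<in>A. D (f x))"
proof (induction A rule: infinite_finite_induct)
  case (infinite A) then show ?case using lin_zero by simp
next
  case empty then show ?case using lin_zero by simp
next
  case (insert x F) then show ?case by (simp add: lin_op_def)
qed

lemma lin_smult: "lin_op D \<Longrightarrow> D (smult c f) = smult c (D f)"
  unfolding lin_op_def by blast

lemma lin_pow: "lin_op D \<Longrightarrow> lin_op (D^^k)"
  by (induction k) (auto simp: lin_op_def)

definition cf :: "nat \<Rightarrow> nat \<Rightarrow> 'a::field_char_0" where
  "cf k j = (if k \<le> j then fact j / fact (j - k) else 0)"

lemma Dpow_p:
  fixes D :: "'a::field_char_0 poly \<Rightarrow> 'a poly"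
  assumes "lin_op D" "basic_seq D p"
  shows "(D^^k) (p m) = smult (cf k m) (p (m - k))"
proof (induction k)
  case 0 then show ?case by (simp add: cf_def)
next
  case (Suc k)
  have Dp: "\<And>n. D (p n) = smult (of_nat n) (p (n - 1))" using assms(2) by (simp add: basic_seq_def)
  have "(D^^Suc k) (p m) = D (smult (cf k m) (p (m - k)))" using Suc by simp
  also have "\<dots> = smult (cf k m * of_nat (m - k)) (p (m - Suc k))"
  proof -
    have "D (smult (cf k m) (p (m - k))) = smult (cf k m) (D (p (m - k)))"
      by (rule lin_smult[OF assms(1)])
    also have "\<dots> = smult (cf k m) (smult (of_nat (m - k)) (p (m - k - 1)))"
      by (simp only: Dp)
    also have "m - k - 1 = m - Suc k" by simp
    finally show ?thesis by (simp only: smult_smult)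
  qed
  also have "cf k m * of_nat (m - k) = (cf (Suc k) m :: 'a)"
  proof (cases "Suc k \<le> m")
    case True
    define j where "j = m - Suc k"
    have j: "m - k = Suc j" "m - Suc k = j" using True by (simp_all add: j_def)
    have c1: "cf k m = (fact m / fact (Suc j) :: 'a)" using True j by (simp add: cf_def)
    have c2: "cf (Suc k) m = (fact m / fact j :: 'a)" using True j by (simp add: cf_def)
    have f: "(fact (Suc j) :: 'a) = of_nat (Suc j) * fact j" by (rule fact_Suc)
    have nz: "(of_nat (Suc j) :: 'a) \<noteq> 0" by (rule of_nat_neq_0)
    show ?thesis unfolding c1 c2 j(1) f using nz by (simp add: divide_simps)
  next
    case False
    then show ?thesis by (simp add: cf_def)
  qed
  finally show ?case .
qed

lemma Dpow_sum:
  fixes D :: "'a::field_char_0 poly \<Rightarrow> 'a poly"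
  assumes "lin_op D" "basic_seq D p"
  shows "(D^^k) (\<Sum>j\<le>n. smult (a j) (p j)) = (\<Sum>j\<le>n. smult (a j * cf k j) (p (j - k)))"
  using lin_pow[OF assms(1)] Dpow_p[OF assms]
  by (simp add: lin_sum lin_smult)

lemma p0: "basic_seq D p \<Longrightarrow> poly (p j) 0 = (if j = 0 then 1 else 0)"
  unfolding basic_seq_def by auto

lemma expand:
  assumes "basic_seq D p" "degree f \<le> n"
  shows "\<exists>a. f = (\<Sum>j\<le>n. smult (a j) (p j))"
  using assms(2)
proof (induction n arbitrary: f)
  case 0
  then have "f = [:coeff f 0:]" by (metis degree_0_id le_zero_eq)
  then have "f = smult (coeff f 0) (p 0)" using assms(1) by (simp add: basic_seq_def)
  then show ?case by auto
next
  case (Suc n)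
  have dp: "degree (p (Suc n)) = Suc n" using assms(1) by (simp add: basic_seq_def)
  then have nz: "coeff (p (Suc n)) (Suc n) \<noteq> 0" by (metis leading_coeff_0_iff nat.simps(3) degree_0)
  define c where "c = coeff f (Suc n) / coeff (p (Suc n)) (Suc n)"
  define g where "g = f - smult c (p (Suc n))"
  have "degree g \<le> n"
  proof (rule degree_le, intro allI impI)
    fix i assume "n < i"
    show "coeff g i = 0"
    proof (cases "i = Suc n")
      case True then show ?thesis using nz by (simp add: g_def c_def)
    next
      case False
      then have "Suc n < i" using \<open>n < i\<close> by simp
      then show ?thesis using Suc.prems dp by (simp add: g_def coeff_eq_0)
    qed
  qed
  then obtain a where a: "g = (\<Sum>j\<le>n. smult (a j) (p j))" using Suc.IH by blast
  have "f = (\<Sum>j\<le>Suc n. smult ((a(Suc n := c)) j) (p j))"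
    using a by (simp add: g_def algebra_simps)
  then show ?case by blast
qed

lemma taylor0:
  fixes D :: "'a::field_char_0 poly \<Rightarrow> 'a poly"
  assumes "lin_op D" "basic_seq D p" "degree g \<le> n"
  shows "g = (\<Sum>k\<le>n. smult (poly ((D^^k) g) 0 / fact k) (p k))"
proof -
  obtain a where a: "g = (\<Sum>j\<le>n. smult (a j) (p j))" using expand assms(2,3) by blast
  have "poly ((D^^k) g) 0 / fact k = a k" if "k \<le> n" for k
  proof -
    have "poly ((D^^k) g) 0 = (\<Sum>j\<le>n. a j * cf k j * poly (p (j - k)) 0)"
      using a Dpow_sum[OF assms(1,2)] by (simp add: poly_sum)
    also have "\<dots> = (\<Sum>j\<le>n. if j = k then a k * fact k else 0)"
      by (rule sum.cong) (auto simp: p0[OF assms(2)] cf_def)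
    also have "\<dots> = a k * fact k" using that by simp
    finally show ?thesis by simp
  qed
  then show ?thesis using a by (metis (no_types, lifting) atMost_iff sum.cong)
qed

lemma deg_Dpow:
  fixes D :: "'a::field_char_0 poly \<Rightarrow> 'a poly"
  assumes "lin_op D" "basic_seq D p" "degree g \<le> n"
  shows "degree ((D^^k) g) \<le> n - k"
proof -
  obtain a where a: "g = (\<Sum>j\<le>n. smult (a j) (p j))" using expand assms(2,3) by blast
  have dp: "\<And>j. degree (p j) = j" using assms(2) by (simp add: basic_seq_def)
  show ?thesis unfolding a Dpow_sum[OF assms(1,2)]
    by (rule degree_sum_le) (auto intro: order.trans[OF degree_smult_le] simp: dp)
qed

lemma uniq:
  fixes D :: "'a::field_char_0 poly \<Rightarrow> 'a poly"
  assumes "lin_op D" "basic_seq D p" "degree g \<le> m"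
    "\<And>k. k \<le> m \<Longrightarrow> poly ((D^^k) g) (w k) = 0"
  shows "g = 0"
  using assms(3,4)
proof (induction m arbitrary: g)
  case 0
  obtain a where a: "g = (\<Sum>j\<le>0. smult (a j) (p j))" using expand assms(2) 0 by blast
  have "p 0 = 1" using assms(2) by (simp add: basic_seq_def)
  then have "g = [:a 0:]" using a by simp
  then show ?case using 0(2)[of 0] by simp
next
  case (Suc m)
  obtain a where a: "g = (\<Sum>j\<le>Suc m. smult (a j) (p j))" using expand assms(2) Suc.prems by blast
  have p00: "p 0 = 1" using assms(2) by (simp add: basic_seq_def)
  have "(D^^Suc m) g = (\<Sum>j\<le>Suc m. smult (a j * cf (Suc m) j) (p (j - Suc m)))"
    unfolding a by (rule Dpow_sum[OF assms(1,2)])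
  then have "poly ((D^^Suc m) g) (w (Suc m)) = (\<Sum>j\<le>Suc m. a j * cf (Suc m) j * poly (p (j - Suc m)) (w (Suc m)))"
    by (simp only: poly_sum poly_smult)
  also have "\<dots> = (\<Sum>j\<le>Suc m. if j = Suc m then a (Suc m) * fact (Suc m) else 0)"
    by (rule sum.cong) (auto simp: cf_def p00)
  also have "\<dots> = a (Suc m) * fact (Suc m)" by simp
  finally have "a (Suc m) * fact (Suc m) = 0" using Suc.prems(2)[of "Suc m"] by simp
  then have "a (Suc m) = 0" by (simp only: mult_eq_0_iff fact_nonzero simp_thms)
  then have g: "g = (\<Sum>j\<le>m. smult (a j) (p j))" using a by simp
  have dp: "\<And>j. degree (p j) = j" using assms(2) by (simp add: basic_seq_def)
  have "degree g \<le> m" unfolding g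
    by (rule degree_sum_le) (auto intro: order.trans[OF degree_smult_le] simp: dp)
  then show ?case using Suc.IH Suc.prems(2) by simp
qed

lemma shift_pow:
  assumes "delta_op D"
  shows "(D^^k) (pcompose f [:a, 1:]) = pcompose ((D^^k) f) [:a, 1:]"
  using assms by (induction k) (auto simp: delta_op_def shift_op_def)

theorem mainTheorem9:
  fixes D :: "'a::field_char_0 poly \<Rightarrow> 'a poly"
    and p :: "nat \<Rightarrow> 'a poly"
    and z :: "nat \<Rightarrow> 'a"
    and T :: "nat \<Rightarrow> nat \<Rightarrow> 'a poly"
  assumes "delta_op D"
    and "basic_seq D p"
    and "\<And>j. gon_basis D (\<lambda>i. z (i + j)) (T j)"
  shows "(\<forall>\<xi> n. pcompose (T 0 n) [:\<xi>, 1:]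
            = (\<Sum>i\<le>n. smult (of_nat (n choose i) * poly (T i (n - i)) \<xi>) (p i)))
       \<and> (\<forall>n. T 0 n = (\<Sum>i\<le>n. smult (of_nat (n choose i) * poly (T i (n - i)) 0) (p i)))"
proof -
  have lin: "lin_op D" using assms(1) by (simp add: delta_op_def)
  have degT: "\<And>j n. degree (T j n) = n" using assms(3) by (simp add: gon_basis_def)
  have evT: "\<And>j k n. poly ((D ^^ k) (T j n)) (z (k + j)) = (if k = n then fact n else 0)"
    using assms(3) by (simp add: gon_basis_def)
  have key: "(D^^i) (T 0 n) = smult (fact n / fact (n - i)) (T i (n - i))" if "i \<le> n" for i n
  proof -
    define c :: 'a where "c = fact n / fact (n - i)"
    define g where "g = (D^^i) (T 0 n) - smult c (T i (n - i))"
    have "degree ((D^^i) (T 0 n)) \<le> n - i" using deg_Dpow[OF lin assms(2)] degT by simp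
    then have dg: "degree g \<le> n - i" unfolding g_def
      by (metis degT degree_diff_le degree_smult_le order.trans)
    have "g = 0"
    proof (rule uniq[OF lin assms(2) dg, of "\<lambda>k. z (k + i)"])
      fix k assume k: "k \<le> n - i"
      have "(D^^k) g = (D^^(k+i)) (T 0 n) - smult c ((D^^k) (T i (n - i)))"
        unfolding g_def using lin_pow[OF lin, of k]
        by (simp add: lin_diff lin_smult funpow_add)
      then have "poly ((D^^k) g) (z (k + i)) = (if k + i = n then fact n else 0)
          - c * (if k = n - i then fact (n - i) else 0)"
        using evT[of "k+i" 0 n] evT[of k i "n-i"] by simp
      also have "\<dots> = 0" using that k by (auto simp: c_def)
      finally show "poly ((D^^k) g) (z (k + i)) = 0" .
    qed
    then show ?thesis by (simp add: g_def c_def)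
  qed
  have A: "pcompose (T 0 n) [:\<xi>, 1:]
            = (\<Sum>i\<le>n. smult (of_nat (n choose i) * poly (T i (n - i)) \<xi>) (p i))" for \<xi> n
  proof -
    have "degree (pcompose (T 0 n) [:\<xi>, 1:]) \<le> n" by (simp add: degree_pcompose degT)
    from taylor0[OF lin assms(2) this]
    have "pcompose (T 0 n) [:\<xi>, 1:] = (\<Sum>k\<le>n. smult (poly ((D^^k) (pcompose (T 0 n) [:\<xi>, 1:])) 0 / fact k) (p k))" .
    also have "\<dots> = (\<Sum>i\<le>n. smult (of_nat (n choose i) * poly (T i (n - i)) \<xi>) (p i))"
    proof (rule sum.cong)
      fix k assume "k \<in> {..n}"
      then have kn: "k \<le> n" by simp
      have "poly ((D^^k) (pcompose (T 0 n) [:\<xi>, 1:])) 0 / fact k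
          = fact n / fact (n - k) * poly (T k (n - k)) \<xi> / fact k"
        by (simp add: shift_pow[OF assms(1)] poly_pcompose key[OF kn])
      also have "\<dots> = of_nat (n choose k) * poly (T k (n - k)) \<xi>"
        by (simp add: binomial_fact[OF kn] field_simps)
      finally show "smult (poly ((D^^k) (pcompose (T 0 n) [:\<xi>, 1:])) 0 / fact k) (p k)
          = smult (of_nat (n choose k) * poly (T k (n - k)) \<xi>) (p k)" by simp
    qed simp
    finally show ?thesis .
  qed
  have B: "T 0 n = (\<Sum>i\<le>n. smult (of_nat (n choose i) * poly (T i (n - i)) 0) (p i))" for n
    using A[of n 0] unfolding pcompose_idR .
  show ?thesis by (intro conjI allI A B)
qed

end
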